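(* Let $(R,\mathfrak m)$ be a regular local ring with $\dim R\ge 2$, let $\{(R_i,\mathfrak m_i)\}_{i\ge 0}$ be an infinite sequence of local quadratic transforms with $R_0=R$, and let $S=\bigcup_{i\ge0}R_i$ with maximal ideal $N=\bigcup_i\mathfrak m_i$. The following are equivalent: (1) $N$ is not a principal ideal of $S$; (2) $N=N^2$; (3) $\{R_i\}$ changes directions infinitely many times; (4) for every nonzero element $x\in N$ and every $n>0$, $\mathrm{ord}_i(x)>n$ for all $i\gg0$.
   Context: A local quadratic transform of a regular local ring $(A,\mathfrak n)$ is a local ring $A[\mathfrak n/y]_{\mathfrak q}$ with $y\in\mathfrak n\setminus\mathfrak n^2$ and $\mathfrak q$ a prime ideal of $A[\mathfrak n/y]$ containing $\mathfrak n$. The sequence satisfies: for each $i\ge 0$, $R_{i+1}$ is a local quadratic transform of $R_i$, $R_i\subsetneq R_{i+1}$, and each $R_i$ is a regular local ring of dimension at least $2$ with maximal ideal $\mathfrak m_i$. $\mathrm{ord}_i$ is the order valuation of $R_i$: $\mathrm{ord}_i(a)=\max\{n: a\in\mathfrak m_i^n\}$ for $0\ne a\in R_i$, extended to the quotient field by $\mathrm{ord}_i(a/b)=\mathrm{ord}_i(a)-\mathrm{ord}_i(b)$. For $n>i$, there is a change of direction between $R_i$ and $R_n$ if $\mathfrak m_i\subseteq\mathfrak m_n^2$. The sequence $\{R_i\}$ changes directions infinitely many times if there are infinitely many $i$ such that there is a change of direction between $R_i$ and $R_{n_i}$ for some $n_i>i$. *)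

theory Defs
  imports Main
begin

text \<open>All rings are subrings of a common ambient field of type 'a (all rings in
  a sequence of local quadratic transforms are birational, i.e. live in one field).\<close>

definition is_subring :: "'a::field set \<Rightarrow> bool" where
  "is_subring S \<longleftrightarrow> 0 \<in> S \<and> 1 \<in> S \<and>
     (\<forall>a\<in>S. \<forall>b\<in>S. a + b \<in> S \<and> a - b \<in> S \<and> a * b \<in> S)"

definition is_ideal :: "'a::field set \<Rightarrow> 'a set \<Rightarrow> bool" where
  "is_ideal I S \<longleftrightarrow> is_subring S \<and> I \<subseteq> S \<and> 0 \<in> I \<and>
     (\<forall>a\<in>I. \<forall>b\<in>I. a + b \<in> I) \<and> (\<forall>s\<in>S. \<forall>a\<in>I. s * a \<in> I)"

definition is_prime_ideal :: "'a::field set \<Rightarrow> 'a set \<Rightarrow> bool" where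
  "is_prime_ideal P S \<longleftrightarrow> is_ideal P S \<and> P \<noteq> S \<and>
     (\<forall>a\<in>S. \<forall>b\<in>S. a * b \<in> P \<longrightarrow> a \<in> P \<or> b \<in> P)"

definition ideal_gen :: "'a::field set \<Rightarrow> 'a set \<Rightarrow> 'a set" where
  "ideal_gen S G = {(\<Sum>g\<in>F. c g * g) | F c. finite F \<and> F \<subseteq> G \<and> (\<forall>g\<in>F. c g \<in> S)}"

fun ideal_pow :: "'a::field set \<Rightarrow> 'a set \<Rightarrow> nat \<Rightarrow> 'a set" where
  "ideal_pow S I 0 = S"
| "ideal_pow S I (Suc k) = ideal_gen S {a * b | a b. a \<in> ideal_pow S I k \<and> b \<in> I}"

definition noetherian :: "'a::field set \<Rightarrow> bool" where
  "noetherian S \<longleftrightarrow> is_subring S \<and>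
     (\<forall>I. is_ideal I S \<longrightarrow> (\<exists>G. finite G \<and> G \<subseteq> S \<and> I = ideal_gen S G))"

definition local_ring :: "'a::field set \<Rightarrow> 'a set \<Rightarrow> bool" where
  "local_ring S m \<longleftrightarrow> is_ideal m S \<and> m \<noteq> S \<and> (\<forall>x\<in>S - m. inverse x \<in> S)"

definition has_prime_chain :: "'a::field set \<Rightarrow> nat \<Rightarrow> bool" where
  "has_prime_chain S n \<longleftrightarrow> (\<exists>P :: nat \<Rightarrow> 'a set.
     (\<forall>k\<le>n. is_prime_ideal (P k) S) \<and> (\<forall>k<n. P k \<subset> P (Suc k)))"

definition krull_dim_eq :: "'a::field set \<Rightarrow> nat \<Rightarrow> bool" where
  "krull_dim_eq S d \<longleftrightarrow> has_prime_chain S d \<and> \<not> has_prime_chain S (Suc d)"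

definition regular_local_ring :: "'a::field set \<Rightarrow> 'a set \<Rightarrow> bool" where
  "regular_local_ring S m \<longleftrightarrow> noetherian S \<and> local_ring S m \<and>
     (\<exists>d. krull_dim_eq S d \<and>
        (\<exists>G. finite G \<and> card G \<le> d \<and> G \<subseteq> S \<and> m = ideal_gen S G))"

definition subring_gen :: "'a::field set \<Rightarrow> 'a set" where
  "subring_gen X = \<Inter>{T. is_subring T \<and> X \<subseteq> T}"

definition localize :: "'a::field set \<Rightarrow> 'a set \<Rightarrow> 'a set" where
  "localize C q = {a / b | a b. a \<in> C \<and> b \<in> C \<and> b \<notin> q}"

definition local_quadratic_transform :: "'a::field set \<Rightarrow> 'a set \<Rightarrow> 'a set \<Rightarrow> bool" where
  "local_quadratic_transform A n B \<longleftrightarrow>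
     (\<exists>y \<in> n - ideal_pow A n 2. \<exists>q.
        is_prime_ideal q (subring_gen (A \<union> (\<lambda>x. x / y) ` n)) \<and> n \<subseteq> q \<and>
        B = localize (subring_gen (A \<union> (\<lambda>x. x / y) ` n)) q)"

definition ord_val :: "'a::field set \<Rightarrow> 'a set \<Rightarrow> 'a \<Rightarrow> nat" where
  "ord_val S m a = (GREATEST n. a \<in> ideal_pow S m n)"

end

theory Submission
  imports Defs "HOL-Library.Infinite_Set"
begin

lemma gen_closed:
  assumes "0 \<in> J" "\<forall>a\<in>J. \<forall>b\<in>J. a+b \<in> J" "\<forall>s\<in>S. \<forall>a\<in>J. s*a \<in> J" "H \<subseteq> J"
  shows "ideal_gen S H \<subseteq> J"
proof
  fix z assume "z \<in> ideal_gen S H"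
  then obtain F c where z: "z = (\<Sum>g\<in>F. c g * g)" "finite F" "F \<subseteq> H" "\<forall>g\<in>F. c g \<in> S"
    unfolding ideal_gen_def by blast
  have "F \<subseteq> H \<longrightarrow> (\<forall>g\<in>F. c g \<in> S) \<longrightarrow> (\<Sum>g\<in>F. c g * g) \<in> J"
    using z(2) by (induction F rule: finite_induct) (use assms in auto)
  thus "z \<in> J" using z by auto
qed

lemma gen_intro: "finite F \<Longrightarrow> F \<subseteq> G \<Longrightarrow> \<forall>g\<in>F. c g \<in> S \<Longrightarrow> (\<Sum>g\<in>F. c g * g) \<in> ideal_gen S G"
  unfolding ideal_gen_def by blast

lemma gen_zero: "0 \<in> ideal_gen S G"
  unfolding ideal_gen_def by (rule CollectI, rule exI[of _ "{}"], auto)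

lemma gen_gen: "1 \<in> S \<Longrightarrow> g \<in> G \<Longrightarrow> g \<in> ideal_gen S G"
  unfolding ideal_gen_def
  by (rule CollectI, rule exI[of _ "{g}"], rule exI[of _ "\<lambda>_. 1"], auto)

lemma gen_mult:
  assumes "is_subring S" "s \<in> S" "z \<in> ideal_gen S G"
  shows "s*z \<in> ideal_gen S G"
proof -
  obtain F c where z: "z = (\<Sum>g\<in>F. c g * g)" "finite F" "F \<subseteq> G" "\<forall>g\<in>F. c g \<in> S"
    using assms(3) unfolding ideal_gen_def by blast
  have "s*z = (\<Sum>g\<in>F. (s * c g) * g)" using z(1) by (simp add: sum_distrib_left mult.assoc)
  moreover have "\<forall>g\<in>F. s * c g \<in> S" using z(4) assms(1,2) unfolding is_subring_def by blast
  ultimately show ?thesis using z gen_intro[of F G "\<lambda>g. s * c g" S] by simp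
qed

lemma gen_add:
  assumes "is_subring S" "z1 \<in> ideal_gen S G" "z2 \<in> ideal_gen S G"
  shows "z1+z2 \<in> ideal_gen S G"
proof -
  obtain F1 c1 where z1: "z1 = (\<Sum>g\<in>F1. c1 g * g)" "finite F1" "F1 \<subseteq> G" "\<forall>g\<in>F1. c1 g \<in> S"
    using assms(2) unfolding ideal_gen_def by blast
  obtain F2 c2 where z2: "z2 = (\<Sum>g\<in>F2. c2 g * g)" "finite F2" "F2 \<subseteq> G" "\<forall>g\<in>F2. c2 g \<in> S"
    using assms(3) unfolding ideal_gen_def by blast
  define c where "c g = (if g\<in>F1 then c1 g else 0) + (if g\<in>F2 then c2 g else 0)" for g
  have e1: "(\<Sum>g\<in>F1\<union>F2. (if g\<in>F1 then c1 g else 0) * g) = z1"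
    unfolding z1(1) using z1(2) z2(2)
    by (subst sum.mono_neutral_right[of "F1\<union>F2" F1]) auto
  have e2: "(\<Sum>g\<in>F1\<union>F2. (if g\<in>F2 then c2 g else 0) * g) = z2"
    unfolding z2(1) using z1(2) z2(2)
    by (subst sum.mono_neutral_right[of "F1\<union>F2" F2]) auto
  have "z1 + z2 = (\<Sum>g\<in>F1\<union>F2. c g * g)"
    unfolding c_def distrib_right sum.distrib e1 e2 ..
  moreover have "\<forall>g\<in>F1\<union>F2. c g \<in> S" using z1(4) z2(4) assms(1) unfolding is_subring_def c_def
    by auto
  ultimately show ?thesis using z1 z2 gen_intro[of "F1\<union>F2" G c S] by simp
qed

lemma gen_mono: "S \<subseteq> S' \<Longrightarrow> G \<subseteq> G' \<Longrightarrow> ideal_gen S G \<subseteq> ideal_gen S' G'"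
  unfolding ideal_gen_def by blast

lemma pow_mono: "S \<subseteq> S' \<Longrightarrow> I \<subseteq> I' \<Longrightarrow> ideal_pow S I k \<subseteq> ideal_pow S' I' k"
proof (induction k)
  case 0 then show ?case by simp
next
  case (Suc k)
  then show ?case by simp (rule gen_mono, auto, blast)
qed

lemma gen_closed_sub:
  assumes "is_subring T" "S \<subseteq> T" "H \<subseteq> ideal_gen T X"
  shows "ideal_gen S H \<subseteq> ideal_gen T X"
  apply (rule gen_closed)
  using assms gen_zero gen_add gen_mult by blast+

lemma pow_Suc_sub:
  assumes "is_subring S" "I \<subseteq> S"
  shows "ideal_pow S I (Suc k) \<subseteq> ideal_pow S I k"
proof (induction k)
  case 0
  show ?case apply simp apply (rule gen_closed)
    using assms unfolding is_subring_def by blast+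
next
  case (Suc k)
  then show ?case by (simp only: ideal_pow.simps) (rule gen_mono, auto)
qed

lemma pow_anti:
  assumes "is_subring S" "I \<subseteq> S" "k \<le> l"
  shows "ideal_pow S I l \<subseteq> ideal_pow S I k"
  using assms(3)
proof (induction l)
  case 0 then show ?case by simp
next
  case (Suc l)
  then show ?case using pow_Suc_sub[OF assms(1,2), of l] by (cases "k = Suc l") auto
qed

lemma pow1_sub:
  assumes "0 \<in> I" "\<forall>a\<in>I. \<forall>b\<in>I. a+b \<in> I" "\<forall>s\<in>S. \<forall>a\<in>I. s*a \<in> I"
  shows "ideal_pow S I 1 \<subseteq> I"
  using assms by (simp, intro gen_closed) auto

lemma sub_pow1: "1 \<in> S \<Longrightarrow> b \<in> I \<Longrightarrow> b \<in> ideal_pow S I 1"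
  by (simp, rule gen_gen, auto, rule exI[of _ 1], auto)

lemma prod_pow2: "1 \<in> S \<Longrightarrow> a \<in> I \<Longrightarrow> b \<in> I \<Longrightarrow> a*b \<in> ideal_pow S I 2"
  using sub_pow1[of S a I] 
  by (simp add: numeral_2_eq_2 del: ideal_pow.simps(2))
     (simp only: ideal_pow.simps, rule gen_gen, auto)

lemma gen_single: "0 \<in> S \<Longrightarrow> ideal_gen S {x} = {c*x | c. c \<in> S}"
proof
  assume "0 \<in> S"
  show "ideal_gen S {x} \<subseteq> {c*x | c. c \<in> S}"
  proof
    fix z assume "z \<in> ideal_gen S {x}"
    then obtain F c where z: "z = (\<Sum>g\<in>F. c g * g)" "finite F" "F \<subseteq> {x}" "\<forall>g\<in>F. c g \<in> S"
      unfolding ideal_gen_def by blast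
    have "F = {} \<or> F = {x}" using z(3) by blast
    then show "z \<in> {c*x | c. c \<in> S}"
    proof
      assume "F = {}" then show ?thesis using z \<open>0 \<in> S\<close> by (auto intro!: exI[of _ 0])
    next
      assume "F = {x}" then show ?thesis using z by auto
    qed
  qed
next
  show "{c*x | c. c \<in> S} \<subseteq> ideal_gen S {x}"
    using gen_intro[of "{x}" "{x}" _ S] by fastforce
qed

lemma subring_pow: "is_subring T \<Longrightarrow> y \<in> T \<Longrightarrow> y^d \<in> T"
  by (induction d) (auto simp: is_subring_def)

lemma pow_shift:
  assumes T: "is_subring T" and ST: "S \<subseteq> T" and S1: "1 \<in> S"
    and I0: "0 \<in> I" and Iadd: "\<forall>a\<in>I. \<forall>b\<in>I. a+b \<in> I" and Imul: "\<forall>s\<in>S. \<forall>a\<in>I. s*a \<in> I"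
    and IJ2: "I \<subseteq> ideal_pow T J 2" and IJ: "I \<subseteq> J"
  shows "1 \<le> k \<Longrightarrow> ideal_pow S I k \<subseteq> ideal_pow T J (Suc k)"
proof (induction k)
  case 0 then show ?case by simp
next
  case (Suc k)
  show ?case
  proof (cases "k = 0")
    case True
    then show ?thesis using pow1_sub[OF I0 Iadd Imul] IJ2 by (simp add: numeral_2_eq_2)
  next
    case False
    then have IH: "ideal_pow S I k \<subseteq> ideal_pow T J (Suc k)" using Suc by simp
    have T1: "1 \<in> T" using T unfolding is_subring_def by blast
    show ?thesis
      apply (simp only: ideal_pow.simps(2)[of S I k] ideal_pow.simps(2)[of T J "Suc k"])
      apply (rule gen_closed_sub[OF T ST])
    proof
      fix z assume "z \<in> {a * b |a b. a \<in> ideal_pow S I k \<and> b \<in> I}"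
      then obtain a b where ab: "z = a*b" "a \<in> ideal_pow S I k" "b \<in> I" by blast
      then have "z \<in> {a * b |a b. a \<in> ideal_pow T J (Suc k) \<and> b \<in> J}" using IH IJ by blast
      then show "z \<in> ideal_gen T {a * b |a b. a \<in> ideal_pow T J (Suc k) \<and> b \<in> J}"
        by (rule gen_gen[OF T1])
    qed
  qed
qed

lemma pow_mult: "is_subring S \<Longrightarrow> s \<in> S \<Longrightarrow> z \<in> ideal_pow S I k \<Longrightarrow> s*z \<in> ideal_pow S I k"
  by (cases k) (auto simp: is_subring_def intro: gen_mult)

lemma pow2_eq: "ideal_pow S I 2 = ideal_gen S {a*b | a b. a \<in> ideal_pow S I 1 \<and> b \<in> I}"
  by (simp add: numeral_2_eq_2)

lemma ord_ge:
  assumes "x \<in> ideal_pow S M k" "\<forall>j. x \<in> ideal_pow S M j \<longrightarrow> j \<le> B"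
  shows "k \<le> ord_val S M x"
  unfolding ord_val_def using assms by (metis Greatest_le_nat)

locale qseq =
  fixes R m :: "nat \<Rightarrow> 'a::field set"
  assumes reg: "\<And>i. regular_local_ring (R i) (m i)"
    and qt: "\<And>i. local_quadratic_transform (R i) (m i) (R (Suc i))"
    and strict: "\<And>i. R i \<subset> R (Suc i)"
begin

lemma sub: "is_subring (R i)"
  using reg[of i] unfolding regular_local_ring_def noetherian_def by blast

lemma loc: "local_ring (R i) (m i)"
  using reg[of i] unfolding regular_local_ring_def by blast

lemma noeth: "noetherian (R i)"
  using reg[of i] unfolding regular_local_ring_def by blast

lemma msub: "m i \<subseteq> R i"
  using loc[of i] unfolding local_ring_def is_ideal_def by blast

lemma m0: "0 \<in> m i"
  using loc[of i] unfolding local_ring_def is_ideal_def by blast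

lemma madd: "a \<in> m i \<Longrightarrow> b \<in> m i \<Longrightarrow> a + b \<in> m i"
  using loc[of i] unfolding local_ring_def is_ideal_def by blast

lemma mmul: "s \<in> R i \<Longrightarrow> a \<in> m i \<Longrightarrow> s * a \<in> m i"
  using loc[of i] unfolding local_ring_def is_ideal_def by blast

lemma R1: "1 \<in> R i" and R0: "0 \<in> R i"
  using sub[of i] unfolding is_subring_def by auto

lemma Radd: "a \<in> R i \<Longrightarrow> b \<in> R i \<Longrightarrow> a + b \<in> R i"
  and Rmul: "a \<in> R i \<Longrightarrow> b \<in> R i \<Longrightarrow> a * b \<in> R i"
  using sub[of i] unfolding is_subring_def by auto

lemma m1: "1 \<notin> m i"
proof
  assume "1 \<in> m i"
  then have "R i \<subseteq> m i" using mmul[of _ i 1] by auto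
  then show False using msub[of i] loc[of i] unfolding local_ring_def by auto
qed

lemma unit: "x \<in> R i \<Longrightarrow> x \<notin> m i \<Longrightarrow> inverse x \<in> R i"
  using loc[of i] unfolding local_ring_def by blast

lemma Rmono1: "R i \<subseteq> R (Suc i)" using strict[of i] by blast

lemma qtfacts: "\<exists>y. y \<in> m i \<and> y \<noteq> 0 \<and> (\<forall>z\<in>m i. z / y \<in> R (Suc i)) \<and> m i \<subseteq> m (Suc i)"
proof -
  obtain y q where y: "y \<in> m i" "y \<notin> ideal_pow (R i) (m i) 2"
    and hq: "is_prime_ideal q (subring_gen (R i \<union> (\<lambda>x. x / y) ` m i))" "m i \<subseteq> q"
    and RS: "R (Suc i) = localize (subring_gen (R i \<union> (\<lambda>x. x / y) ` m i)) q"
    using qt[of i] unfolding local_quadratic_transform_def by blast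
  define C where "C = subring_gen (R i \<union> (\<lambda>x. x / y) ` m i)"
  have C1: "1 \<in> C" unfolding C_def subring_gen_def is_subring_def by blast
  have CX: "R i \<union> (\<lambda>x. x / y) ` m i \<subseteq> C" unfolding C_def subring_gen_def by blast
  have qC: "q \<subseteq> C" and qm: "\<forall>s\<in>C. \<forall>a\<in>q. s * a \<in> q" and qne: "q \<noteq> C"
    using hq(1) unfolding C_def is_prime_ideal_def is_ideal_def by blast+
  have q1: "1 \<notin> q"
  proof
    assume "1 \<in> q" then have "C \<subseteq> q" using qm by force
    then show False using qC qne by blast
  qed
  have CR: "C \<subseteq> R (Suc i)"
  proof
    fix c assume "c \<in> C" then have "c = c / 1 \<and> c \<in> C \<and> 1 \<in> C \<and> 1 \<notin> q" using C1 q1 by simp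
    then show "c \<in> R (Suc i)" unfolding RS C_def[symmetric] localize_def by blast
  qed
  have y0: "y \<noteq> 0"
  proof
    assume "y = 0"
    moreover have "0 \<in> ideal_pow (R i) (m i) 2" by (simp add: numeral_2_eq_2 gen_zero)
    ultimately show False using y(2) by simp
  qed
  have div: "\<forall>z\<in>m i. z / y \<in> R (Suc i)" using CX CR by blast
  have mm: "m i \<subseteq> m (Suc i)"
  proof
    fix z assume z: "z \<in> m i"
    then have zR: "z \<in> R (Suc i)" using msub[of i] CX CR by blast
    show "z \<in> m (Suc i)"
    proof (rule ccontr)
      assume nz: "z \<notin> m (Suc i)"
      then have "z \<noteq> 0" using m0 by auto
      from unit[OF zR nz] obtain a b where ab: "inverse z = a / b" "a \<in> C" "b \<in> C" "b \<notin> q"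
        unfolding RS C_def[symmetric] localize_def by blast
      have "b \<noteq> 0" using ab(1) \<open>z \<noteq> 0\<close> by auto
      then have "b = a * z" using ab(1) \<open>z \<noteq> 0\<close> by (simp add: field_simps)
      moreover have "a * z \<in> q" using qm ab(2) z hq(2) by blast
      ultimately show False using ab(4) by simp
    qed
  qed
  show ?thesis using y(1) y0 div mm by blast
qed

lemma mmono1: "m i \<subseteq> m (Suc i)" using qtfacts[of i] by blast

lemma Rmono: "i \<le> j \<Longrightarrow> R i \<subseteq> R j"
  by (rule lift_Suc_mono_le[of R], rule Rmono1)

lemma mmono: "i \<le> j \<Longrightarrow> m i \<subseteq> m j"
  by (rule lift_Suc_mono_le[of m], rule mmono1)

lemma powsub: "ideal_pow (R i) (m i) k \<subseteq> R i"
  using pow_anti[OF sub msub, of 0 k] by simp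

lemma bounded:
  assumes x0: "x \<noteq> 0"
  shows "\<exists>B. \<forall>k. x \<in> ideal_pow (R i) (m i) k \<longrightarrow> k \<le> B"
proof (rule ccontr)
  assume "\<not> ?thesis"
  then have unb: "\<forall>B. \<exists>k. x \<in> ideal_pow (R i) (m i) k \<and> B < k" by (auto simp: not_le)
  have allk: "x \<in> ideal_pow (R i) (m i) k" for k
  proof -
    obtain k' where "x \<in> ideal_pow (R i) (m i) k'" "k < k'" using unb by blast
    then show ?thesis using pow_anti[OF sub msub, of k k'] by auto
  qed
  obtain y where y: "y \<in> m i" "y \<noteq> 0" "\<forall>z\<in>m i. z / y \<in> R (Suc i)" "m i \<subseteq> m (Suc i)"
    using qtfacts[of i] by blast
  define T where "T = R (Suc i)"
  have T: "is_subring T" unfolding T_def by (rule sub)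
  have RT: "R i \<subseteq> T" unfolding T_def by (rule Rmono1)
  have yT: "y \<in> T" using y(1) msub RT by blast
  have Tops: "a \<in> T \<Longrightarrow> b \<in> T \<Longrightarrow> a + b \<in> T \<and> a * b \<in> T" for a b
    using T unfolding is_subring_def by blast
  have T0: "0 \<in> T" and T1: "1 \<in> T" using T unfolding is_subring_def by blast+
  have divk: "\<forall>z\<in>ideal_pow (R i) (m i) k. z / y^k \<in> T" for k
  proof (induction k)
    case 0 then show ?case using RT by auto
  next
    case (Suc k)
    have "ideal_pow (R i) (m i) (Suc k) \<subseteq> {z. z / y^(Suc k) \<in> T}"
      unfolding ideal_pow.simps
    proof (rule gen_closed)
      show "0 \<in> {z. z / y^(Suc k) \<in> T}" using T0 by simp
      show "\<forall>a\<in>{z. z / y ^ Suc k \<in> T}. \<forall>b\<in>{z. z / y ^ Suc k \<in> T}. a + b \<in> {z. z / y ^ Suc k \<in> T}"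
        using Tops by (simp add: add_divide_distrib)
      show "\<forall>s\<in>R i. \<forall>a\<in>{z. z / y ^ Suc k \<in> T}. s * a \<in> {z. z / y ^ Suc k \<in> T}"
      proof (intro ballI)
        fix s a assume "s \<in> R i" "a \<in> {z. z / y ^ Suc k \<in> T}"
        then have "s * (a / y ^ Suc k) \<in> T" using Tops RT by blast
        then show "s * a \<in> {z. z / y ^ Suc k \<in> T}" by (metis mem_Collect_eq times_divide_eq_right)
      qed
      show "{a * b |a b. a \<in> ideal_pow (R i) (m i) k \<and> b \<in> m i} \<subseteq> {z. z / y ^ Suc k \<in> T}"
      proof
        fix z assume "z \<in> {a * b |a b. a \<in> ideal_pow (R i) (m i) k \<and> b \<in> m i}"
        then obtain a b where ab: "z = a*b" "a \<in> ideal_pow (R i) (m i) k" "b \<in> m i" by blast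
        have "z / y^(Suc k) = (a / y^k) * (b / y)" using ab(1) by (simp add: field_simps)
        moreover have "a / y^k \<in> T" "b / y \<in> T" using Suc ab y(3) unfolding T_def by auto
        ultimately show "z \<in> {z. z / y ^ Suc k \<in> T}" using Tops[of "a/y^k" "b/y"] by (metis mem_Collect_eq)
      qed
    qed
    then show ?case by blast
  qed
  have xk: "x / y^k \<in> T" for k using divk allk by blast
  define I where "I = {z \<in> T. \<exists>k. z * y^k / x \<in> T}"
  have up: "z * y^k / x \<in> T \<Longrightarrow> k \<le> K \<Longrightarrow> z * y^K / x \<in> T" for z k K
  proof -
    assume a: "z * y^k / x \<in> T" "k \<le> K"
    have "y^K = y^k * y^(K-k)" using a(2) by (metis le_add_diff_inverse power_add)
    then have e: "z * y^K / x = (z * y^k / x) * y^(K-k)"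
      by simp
    have "y^(K-k) \<in> T" using subring_pow[OF T yT] .
    then show ?thesis unfolding e using a(1) Tops[of "z*y^k/x" "y^(K-k)"] by blast
  qed
  have Iid: "is_ideal I T"
    unfolding is_ideal_def
  proof (intro conjI)
    show "is_subring T" by (rule T)
    show "I \<subseteq> T" unfolding I_def by blast
    show "0 \<in> I" unfolding I_def using T0 by auto
    show "\<forall>a\<in>I. \<forall>b\<in>I. a + b \<in> I"
    proof (intro ballI)
      fix a b assume "a \<in> I" "b \<in> I"
      then obtain k1 k2 where "a \<in> T" "b \<in> T" "a * y^k1 / x \<in> T" "b * y^k2 / x \<in> T"
        unfolding I_def by blast
      then have "a * y^(k1+k2) / x \<in> T" "b * y^(k1+k2) / x \<in> T"
        using up[of a k1 "k1+k2"] up[of b k2 "k1+k2"] by simp_all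
      then have "(a + b) * y^(k1+k2) / x \<in> T" using Tops by (simp add: distrib_right add_divide_distrib)
      then show "a + b \<in> I" unfolding I_def using Tops \<open>a \<in> T\<close> \<open>b \<in> T\<close> by blast
    qed
    show "\<forall>s\<in>T. \<forall>a\<in>I. s * a \<in> I"
    proof (intro ballI)
      fix s a assume "s \<in> T" "a \<in> I"
      then obtain k where "a \<in> T" "a * y^k / x \<in> T" unfolding I_def by blast
      then have "s * (a * y^k / x) \<in> T" using Tops \<open>s \<in> T\<close> by blast
      then show "s * a \<in> I" unfolding I_def using Tops \<open>s \<in> T\<close> \<open>a \<in> T\<close>
        by (auto simp: mult.assoc)
    qed
  qed
  obtain G where G: "finite G" "G \<subseteq> T" "I = ideal_gen T G"
    using noeth[of "Suc i"] Iid unfolding noetherian_def T_def by blast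
  have GI: "G \<subseteq> I" using G(3) gen_gen[OF T1] by blast
  have "finite G \<Longrightarrow> G \<subseteq> I \<Longrightarrow> \<exists>K. \<forall>g\<in>G. g * y^K / x \<in> T"
  proof (induction G rule: finite_induct)
    case empty then show ?case by simp
  next
    case (insert g G)
    then obtain K where K: "\<forall>g\<in>G. g * y^K / x \<in> T" by blast
    obtain k where k: "g * y^k / x \<in> T" using insert(4) unfolding I_def by blast
    show ?case
      using K k up[of _ K "max K k"] up[of g k "max K k"] by (intro exI[of _ "max K k"]) simp
  qed
  then obtain K where K: "\<forall>g\<in>G. g * y^K / x \<in> T" using G(1) GI by blast
  have "I \<subseteq> {z. z * y^K / x \<in> T}"
    unfolding G(3)
  proof (rule gen_closed)
    show "0 \<in> {z. z * y ^ K / x \<in> T}" using T0 by simp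
    show "\<forall>a\<in>{z. z * y ^ K / x \<in> T}. \<forall>b\<in>{z. z * y ^ K / x \<in> T}. a + b \<in> {z. z * y ^ K / x \<in> T}"
      using Tops by (simp add: distrib_right add_divide_distrib)
    show "\<forall>s\<in>T. \<forall>a\<in>{z. z * y ^ K / x \<in> T}. s * a \<in> {z. z * y ^ K / x \<in> T}"
    proof (intro ballI)
      fix s a assume "s \<in> T" "a \<in> {z. z * y ^ K / x \<in> T}"
      then have "s * (a * y ^ K / x) \<in> T" using Tops by blast
      then show "s * a \<in> {z. z * y ^ K / x \<in> T}" by (simp add: mult.assoc)
    qed
    show "G \<subseteq> {z. z * y ^ K / x \<in> T}" using K by blast
  qed
  moreover have "x / y^(Suc K) \<in> I"
  proof -
    have e: "(x / y^(Suc K)) * y^(Suc K) / x = 1" using x0 y(2) by simp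
    have "x / y^(Suc K) \<in> T" by (rule xk)
    then show ?thesis unfolding I_def using T1 e by (metis (mono_tags, lifting) mem_Collect_eq)
  qed
  ultimately have "(x / y^(Suc K)) * y^K / x \<in> T" by blast
  moreover have "(x / y^(Suc K)) * y^K / x = inverse y" using x0 y(2) by (simp add: divide_simps)
  ultimately have iy: "inverse y \<in> T" by simp
  have "y \<in> m (Suc i)" using y(1,4) by blast
  then have "inverse y * y \<in> m (Suc i)" using mmul iy unfolding T_def by blast
  then show False using m1 y(2) by simp
qed


lemma main:
  assumes S_def: "S = (\<Union>i. R i)" and N_def: "N = (\<Union>i. m i)"
  shows "((\<not> (\<exists>x\<in>S. N = ideal_gen S {x})) \<longleftrightarrow> N = ideal_pow S N 2)
       \<and> (N = ideal_pow S N 2 \<longleftrightarrow>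
            infinite {i. \<exists>n>i. m i \<subseteq> ideal_pow (R n) (m n) 2})
       \<and> (infinite {i. \<exists>n>i. m i \<subseteq> ideal_pow (R n) (m n) 2} \<longleftrightarrow>
            (\<forall>x\<in>N. x \<noteq> 0 \<longrightarrow> (\<forall>n>0. \<exists>i0. \<forall>i\<ge>i0. n < ord_val (R i) (m i) x)))"
proof -
  define C where "C = infinite {i. \<exists>n>i. m i \<subseteq> ideal_pow (R n) (m n) 2}"
  have inS: "z \<in> S \<longleftrightarrow> (\<exists>i. z \<in> R i)" for z using S_def by blast
  have inN: "z \<in> N \<longleftrightarrow> (\<exists>i. z \<in> m i)" for z using N_def by blast
  have S0: "0 \<in> S" using R0 inS by blast
  have S1: "1 \<in> S" using R1 inS by blast
  have Sops: "a + b \<in> S \<and> a * b \<in> S" if h: "a \<in> S" "b \<in> S" for a b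
  proof -
    obtain i j where "a \<in> R i" "b \<in> R j" using h inS by blast
    then have "a \<in> R (max i j)" "b \<in> R (max i j)" using Rmono[of i "max i j"] Rmono[of j "max i j"] by auto
    then show ?thesis using Radd Rmul inS by blast
  qed
  have NS: "N \<subseteq> S" using msub inS inN by blast
  have N0: "0 \<in> N" using m0 inN by blast
  have Nadd: "a + b \<in> N" if h: "a \<in> N" "b \<in> N" for a b
  proof -
    obtain i j where "a \<in> m i" "b \<in> m j" using h inN by blast
    then have "a \<in> m (max i j)" "b \<in> m (max i j)" using mmono[of i "max i j"] mmono[of j "max i j"] by auto
    then show ?thesis using madd inN by blast
  qed
  have Nmul: "s * a \<in> N" if h: "s \<in> S" "a \<in> N" for s a
  proof -
    obtain i j where "s \<in> R i" "a \<in> m j" using h inN inS by blast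
    then have "s \<in> R (max i j)" "a \<in> m (max i j)" using Rmono[of i "max i j"] mmono[of j "max i j"] by auto
    then show ?thesis using mmul inN by blast
  qed
  have N1: "ideal_pow S N 1 \<subseteq> N"
    by (rule pow1_sub) (use N0 Nadd Nmul in auto)
  have N2N: "ideal_pow S N 2 \<subseteq> N"
    unfolding pow2_eq
  proof (rule gen_closed)
    show "{a * b |a b. a \<in> ideal_pow S N 1 \<and> b \<in> N} \<subseteq> N"
      using N1 NS Nmul by blast
  qed (use N0 Nadd Nmul in auto)
  have step1: "N = ideal_pow S N 2" if C: C
  proof
    show "N \<subseteq> ideal_pow S N 2"
    proof
      fix z assume "z \<in> N" then obtain j where zj: "z \<in> m j" using inN by blast
      obtain i where i: "i \<ge> j" "\<exists>n>i. m i \<subseteq> ideal_pow (R n) (m n) 2"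
        using C unfolding C_def infinite_nat_iff_unbounded_le by blast
      then obtain n where n: "n > i" "m i \<subseteq> ideal_pow (R n) (m n) 2" by blast
      have "z \<in> m i" using zj mmono[OF i(1)] by blast
      then have "z \<in> ideal_pow (R n) (m n) 2" using n by blast
      moreover have "ideal_pow (R n) (m n) 2 \<subseteq> ideal_pow S N 2"
        by (rule pow_mono) (use inS inN in auto)
      ultimately show "z \<in> ideal_pow S N 2" by blast
    qed
  qed (rule N2N)
  have step2: "\<exists>x i0. x \<in> m i0 \<and> x \<noteq> 0 \<and> (\<forall>n>i0. x \<notin> ideal_pow (R n) (m n) 2) \<and> x \<in> S \<and> N = ideal_gen S {x}"
    if nC: "\<not> C"
  proof -
    from nC obtain b where b: "\<forall>i\<in>{i. \<exists>n>i. m i \<subseteq> ideal_pow (R n) (m n) 2}. i \<le> b"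
      unfolding C_def finite_nat_set_iff_bounded_le by blast
    define i0 where "i0 = Suc b"
    have nochg: "\<not> m i0 \<subseteq> ideal_pow (R n) (m n) 2" if "n > i0" for n
      using b that unfolding i0_def by fastforce
    obtain x where x: "x \<in> m i0" "x \<noteq> 0" "\<forall>z\<in>m i0. z / x \<in> R (Suc i0)"
      using qtfacts[of i0] by blast
    have xN: "x \<in> N" using x(1) inN by blast
    have A: "x \<notin> ideal_pow (R n) (m n) 2" if "n > i0" for n
    proof
      assume xin: "x \<in> ideal_pow (R n) (m n) 2"
      have "m i0 \<subseteq> ideal_pow (R n) (m n) 2"
      proof
        fix z assume z: "z \<in> m i0"
        have "z / x \<in> R n" using x(3) z Rmono[of "Suc i0" n] that by auto
        then have "(z / x) * x \<in> ideal_pow (R n) (m n) 2" using pow_mult[OF sub] xin by blast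
        moreover have "(z / x) * x = z" using x(2) by simp
        ultimately show "z \<in> ideal_pow (R n) (m n) 2" by simp
      qed
      then show False using nochg that by blast
    qed
    have G: "ideal_gen S {x} = {c*x | c. c \<in> S}" by (rule gen_single[OF S0])
    have "N \<subseteq> {c*x | c. c \<in> S}"
    proof
      fix z assume "z \<in> N" then obtain j where zj: "z \<in> m j" using inN by blast
      define n where "n = max j i0"
      have zn: "z \<in> m n" and xn: "x \<in> m n" using zj x(1) mmono[of j n] mmono[of i0 n] n_def by auto
      obtain y where y: "y \<in> m n" "y \<noteq> 0" "\<forall>z\<in>m n. z / y \<in> R (Suc n)" "m n \<subseteq> m (Suc n)"
        using qtfacts[of n] by blast
      have xy: "x / y \<in> R (Suc n)" using y(3) xn by blast
      have "x / y \<notin> m (Suc n)"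
      proof
        assume "x / y \<in> m (Suc n)"
        then have "y * (x / y) \<in> ideal_pow (R (Suc n)) (m (Suc n)) 2"
          using prod_pow2[OF R1] y(1,4) by blast
        then have "x \<in> ideal_pow (R (Suc n)) (m (Suc n)) 2" using y(2) by simp
        moreover have "Suc n > i0" using n_def by simp
        ultimately show False using A by blast
      qed
      then have inv: "inverse (x / y) \<in> R (Suc n)" using unit xy by blast
      have e: "z / x = (z / y) * inverse (x / y)" using y(2) x(2) by (simp add: field_simps)
      have "z / y \<in> R (Suc n)" using y(3) zn by blast
      then have "(z / y) * inverse (x / y) \<in> R (Suc n)" using Rmul inv by blast
      then have "z / x \<in> R (Suc n)" unfolding e .
      then have "z / x \<in> S" using inS by blast
      moreover have "z = (z / x) * x" using x(2) by simp
      ultimately show "z \<in> {c*x | c. c \<in> S}" by blast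
    qed
    moreover have "{c*x | c. c \<in> S} \<subseteq> N" using Nmul xN by blast
    ultimately have "N = ideal_gen S {x}" using G by blast
    then show ?thesis using x(1,2) A xN NS by blast
  qed
  have step3: "N \<noteq> ideal_pow S N 2" if xS: "x \<in> S" and NX: "N = ideal_gen S {x}" for x
  proof
    assume NN: "N = ideal_pow S N 2"
    have Nc: "N = {c*x | c. c \<in> S}" using NX gen_single[OF S0] by simp
    have "ideal_pow S N 2 \<subseteq> {x*x*s | s. s \<in> S}"
      unfolding pow2_eq
    proof (rule gen_closed)
      show "0 \<in> {x*x*s | s. s \<in> S}" using S0 by (auto intro!: exI[of _ 0])
      show "\<forall>a\<in>{x*x*s | s. s \<in> S}. \<forall>b\<in>{x*x*s | s. s \<in> S}. a + b \<in> {x*x*s | s. s \<in> S}"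
      proof (intro ballI)
        fix a b assume "a \<in> {x*x*s | s. s \<in> S}" "b \<in> {x*x*s | s. s \<in> S}"
        then obtain s1 s2 where "a = x*x*s1" "b = x*x*s2" "s1 \<in> S" "s2 \<in> S" by blast
        then have "a + b = x*x*(s1+s2)" "s1 + s2 \<in> S" using Sops by (auto simp: distrib_left)
        then show "a + b \<in> {x*x*s | s. s \<in> S}" by blast
      qed
      show "\<forall>t\<in>S. \<forall>a\<in>{x*x*s | s. s \<in> S}. t * a \<in> {x*x*s | s. s \<in> S}"
      proof (intro ballI)
        fix t a assume "t \<in> S" "a \<in> {x*x*s | s. s \<in> S}"
        then obtain s1 where "a = x*x*s1" "s1 \<in> S" by blast
        then have "t * a = x*x*(t*s1)" "t * s1 \<in> S" using Sops \<open>t \<in> S\<close> by (auto simp: ac_simps)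
        then show "t * a \<in> {x*x*s | s. s \<in> S}" by blast
      qed
      show "{a * b |a b. a \<in> ideal_pow S N 1 \<and> b \<in> N} \<subseteq> {x*x*s | s. s \<in> S}"
      proof
        fix z assume "z \<in> {a * b |a b. a \<in> ideal_pow S N 1 \<and> b \<in> N}"
        then obtain a b where ab: "z = a*b" "a \<in> N" "b \<in> N" using N1 by blast
        then obtain c1 c2 where "a = c1*x" "b = c2*x" "c1 \<in> S" "c2 \<in> S" using Nc by blast
        then have "z = x*x*(c1*c2)" "c1*c2 \<in> S" using ab(1) Sops by (auto simp: ac_simps)
        then show "z \<in> {x*x*s | s. s \<in> S}" by blast
      qed
    qed
    moreover have xN: "x \<in> N" using Nc S1 by force
    ultimately obtain s where s: "x = x*x*s" "s \<in> S" using NN by blast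
    obtain y0 where y0: "y0 \<in> m 0" "y0 \<noteq> 0" using qtfacts[of 0] by blast
    have "x \<noteq> 0"
    proof
      assume "x = 0"
      then have "N = {0}" using Nc S0 by auto
      moreover have "y0 \<in> N" using y0(1) inN by blast
      ultimately show False using y0(2) by simp
    qed
    then have one: "s * x = 1" using s(1)
      by (metis mult.assoc mult.commute mult_cancel_left1)
    obtain a b where "x \<in> m a" "s \<in> R b" using xN s(2) inN inS by blast
    then have "x \<in> m (max a b)" "s \<in> R (max a b)" using mmono[of a "max a b"] Rmono[of b "max a b"] by auto
    then have "s * x \<in> m (max a b)" using mmul by blast
    then show False using one m1 by simp
  qed
  have step4: "\<forall>x\<in>N. x \<noteq> 0 \<longrightarrow> (\<forall>n>0. \<exists>i0. \<forall>i\<ge>i0. n < ord_val (R i) (m i) x)" if C: C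
  proof (intro ballI impI allI)
    fix x :: 'a and n :: nat assume xN: "x \<in> N" and x0: "x \<noteq> 0"
    obtain j where xj: "x \<in> m j" using xN inN by blast
    have ev: "\<exists>i. x \<in> ideal_pow (R i) (m i) k" for k
    proof (induction k)
      case 0 then show ?case using xj msub by auto
    next
      case (Suc k)
      show ?case
      proof (cases "k = 0")
        case True then show ?thesis using sub_pow1[OF R1 xj] by auto
      next
        case False
        obtain i where i: "x \<in> ideal_pow (R i) (m i) k" using Suc by blast
        obtain i' where i': "i' \<ge> i" "\<exists>n>i'. m i' \<subseteq> ideal_pow (R n) (m n) 2"
          using C unfolding C_def infinite_nat_iff_unbounded_le by blast
        then obtain n' where n': "n' > i'" "m i' \<subseteq> ideal_pow (R n') (m n') 2" by blast
        have "x \<in> ideal_pow (R i') (m i') k"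
          using i pow_mono[OF Rmono[OF i'(1)] mmono[OF i'(1)]] by blast
        moreover have "ideal_pow (R i') (m i') k \<subseteq> ideal_pow (R n') (m n') (Suc k)"
          apply (rule pow_shift[OF sub Rmono R1 m0 _ _ n'(2) mmono])
          using n' False madd mmul by auto
        ultimately show ?thesis by blast
      qed
    qed
    then obtain i1 where i1: "x \<in> ideal_pow (R i1) (m i1) (Suc n)" by blast
    have "\<forall>i\<ge>i1. n < ord_val (R i) (m i) x"
    proof (intro allI impI)
      fix i assume "i \<ge> i1"
      then have xi: "x \<in> ideal_pow (R i) (m i) (Suc n)"
        using i1 pow_mono[OF Rmono mmono] by blast
      obtain B where B: "\<forall>k. x \<in> ideal_pow (R i) (m i) k \<longrightarrow> k \<le> B" using bounded[OF x0] by blast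
      show "n < ord_val (R i) (m i) x" using ord_ge[OF xi B] by simp
    qed
    then show "\<exists>i0. \<forall>i\<ge>i0. n < ord_val (R i) (m i) x" by blast
  qed
  have step5: "\<not> (\<forall>x\<in>N. x \<noteq> 0 \<longrightarrow> (\<forall>n>0. \<exists>i0. \<forall>i\<ge>i0. n < ord_val (R i) (m i) x))"
    if nC: "\<not> C"
  proof
    assume H: "\<forall>x\<in>N. x \<noteq> 0 \<longrightarrow> (\<forall>n>0. \<exists>i0. \<forall>i\<ge>i0. n < ord_val (R i) (m i) x)"
    obtain x i0 where x: "x \<in> m i0" "x \<noteq> 0" "\<forall>n>i0. x \<notin> ideal_pow (R n) (m n) 2"
      using step2[OF nC] by blast
    have xN: "x \<in> N" using x(1) inN by blast
    obtain i1 where i1: "\<forall>i\<ge>i1. 1 < ord_val (R i) (m i) x" using H xN x(2) by fastforce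
    define i where "i = max i1 (Suc i0)"
    have "i0 \<le> i" "i0 < i" using i_def by auto
    then have xi: "x \<in> m i" using x(1) mmono[of i0 i] by blast
    have xn2: "x \<notin> ideal_pow (R i) (m i) 2" using x(3) \<open>i0 < i\<close> by blast
    have "ord_val (R i) (m i) x = 1"
      unfolding ord_val_def
    proof (rule Greatest_equality)
      show "x \<in> ideal_pow (R i) (m i) 1" by (rule sub_pow1[OF R1 xi])
      fix k assume k: "x \<in> ideal_pow (R i) (m i) k"
      show "k \<le> 1"
      proof (rule ccontr)
        assume "\<not> k \<le> 1"
        then have "x \<in> ideal_pow (R i) (m i) 2" using k pow_anti[OF sub msub, of 2 k] by auto
        then show False using xn2 by blast
      qed
    qed
    moreover have "1 < ord_val (R i) (m i) x" using i1 i_def by auto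
    ultimately show False by simp
  qed
  have hP: "\<exists>x\<in>S. N = ideal_gen S {x}" if nc: "\<not> C"
  proof -
    obtain x i0 where "x \<in> S" "N = ideal_gen S {x}" using step2[OF nc] by blast
    then show ?thesis by blast
  qed
  have hPQ: "N \<noteq> ideal_pow S N 2" if "\<exists>x\<in>S. N = ideal_gen S {x}"
    using that step3 by blast
  have c1: "(\<not> (\<exists>x\<in>S. N = ideal_gen S {x})) \<longleftrightarrow> N = ideal_pow S N 2"
    using hP hPQ step1 by blast
  have c2: "N = ideal_pow S N 2 \<longleftrightarrow> C"
    using hP hPQ step1 by blast
  have c3: "C \<longleftrightarrow> (\<forall>x\<in>N. x \<noteq> 0 \<longrightarrow> (\<forall>n>0. \<exists>i0. \<forall>i\<ge>i0. n < ord_val (R i) (m i) x))"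
    using step4 step5 by blast
  show ?thesis
    using c1 c2 c3 unfolding C_def by blast
qed

end


theorem proposition3p5:
  fixes R m :: "nat \<Rightarrow> 'a::field set"
  assumes reg: "\<And>i. regular_local_ring (R i) (m i)"
    and dim2: "\<And>i. has_prime_chain (R i) 2"
    and qt: "\<And>i. local_quadratic_transform (R i) (m i) (R (Suc i))"
    and strict: "\<And>i. R i \<subset> R (Suc i)"
  defines "S \<equiv> (\<Union>i. R i)"
    and "N \<equiv> (\<Union>i. m i)"
  shows "((\<not> (\<exists>x\<in>S. N = ideal_gen S {x})) \<longleftrightarrow> N = ideal_pow S N 2)
       \<and> (N = ideal_pow S N 2 \<longleftrightarrow>
            infinite {i. \<exists>n>i. m i \<subseteq> ideal_pow (R n) (m n) 2})
       \<and> (infinite {i. \<exists>n>i. m i \<subseteq> ideal_pow (R n) (m n) 2} \<longleftrightarrow>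
            (\<forall>x\<in>N. x \<noteq> 0 \<longrightarrow> (\<forall>n>0. \<exists>i0. \<forall>i\<ge>i0. n < ord_val (R i) (m i) x)))"
proof -
  interpret qseq R m using reg qt strict by unfold_locales
  show ?thesis by (rule main) (simp_all add: S_def N_def)
qed

end
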